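(* Let $M=(A,B;C,D)$ be real with $AD-BC=1$, $B\neq0$, let $\psi\in L^{2}(\mathbb{R}^{2})$ be a polar mother wavelet, $f\in L^{2}(\mathbb{R}^{2})$, $\boldsymbol{c}\in\mathbb{R}^2$, and $h(\boldsymbol{t})=f(\boldsymbol{t}-\boldsymbol{c})e^{-j\frac{A}{B}\boldsymbol{t}\cdot\boldsymbol{c}}$. Then for all $\boldsymbol{b}\in\mathbb{R}^2$, $a>0$, $\theta\in[0,2\pi]$, $$W^{M}_{h}(\boldsymbol{b},a,\theta)=e^{-j\frac{A}{B}\boldsymbol{b}\cdot\boldsymbol{c}}\,W^{M}_{f}(\boldsymbol{b}-\boldsymbol{c},a,\theta).$$
   Context: $j$ is the imaginary unit. $R_\theta(t_1,t_2)=(t_1\cos\theta+t_2\sin\theta,\,-t_1\sin\theta+t_2\cos\theta)$. The PLCWT of $f\in L^2(\mathbb{R}^2)$ with respect to $\psi$ is $W^{M}_{f}(\boldsymbol{b},a,\theta)=\frac1a\int_{\mathbb{R}^{2}}f(\boldsymbol{t})\overline{\psi\!\left(\frac{R_{-\theta}(\boldsymbol{t}-\boldsymbol{b})}{a}\right)}e^{j\frac{A}{2B}(|\boldsymbol{t}|^{2}-|\boldsymbol{b}|^{2})}{\rm d}\boldsymbol{t}$ for $a>0$, $\boldsymbol{b}\in\mathbb{R}^2$, $\theta\in[0,2\pi]$. *)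

theory Defs
  imports "HOL-Analysis.Analysis"
begin

text \<open>Points of R^2 are modelled as pairs of reals; lborel on real \<times> real is
  the 2-dimensional Lebesgue measure.\<close>

definition rot :: "real \<Rightarrow> real \<times> real \<Rightarrow> real \<times> real" where
  "rot \<theta> t = (fst t * cos \<theta> + snd t * sin \<theta>, - fst t * sin \<theta> + snd t * cos \<theta>)"

definition L2 :: "(real \<times> real \<Rightarrow> complex) \<Rightarrow> bool" where
  "L2 f \<longleftrightarrow> f \<in> borel_measurable lborel \<and> integrable lborel (\<lambda>t. (norm (f t))\<^sup>2)"

text \<open>Plancherel (L^2) Fourier transform: psi_hat is the L^2 limit of the Fourier
  integrals truncated to balls of radius n.\<close>
definition is_L2_fourier :: "(real \<times> real \<Rightarrow> complex) \<Rightarrow> (real \<times> real \<Rightarrow> complex) \<Rightarrow> bool" where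
  "is_L2_fourier psi psihat \<longleftrightarrow> L2 psihat \<and>
     ((\<lambda>n::nat. LINT w|lborel. (norm (psihat w -
         (LINT t|lborel. indicator (ball 0 (real n)) t *\<^sub>R (psi t * exp (- \<i> * complex_of_real (w \<bullet> t))))))\<^sup>2)
      \<longlonglongrightarrow> 0)"

text \<open>Polar mother wavelet: square integrable and admissible,
  C_psi = (2 pi)^2 \<integral> |psi_hat(w)|^2 / |w|^2 dw < \<infinity>.\<close>
definition polar_mother_wavelet :: "(real \<times> real \<Rightarrow> complex) \<Rightarrow> bool" where
  "polar_mother_wavelet psi \<longleftrightarrow> L2 psi \<and>
     (\<exists>psihat. is_L2_fourier psi psihat \<and>
        (\<integral>\<^sup>+ w. ennreal ((norm (psihat w))\<^sup>2 / (norm w)\<^sup>2) \<partial>lborel) < \<infinity>)"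

text \<open>Polar linear canonical wavelet transform W^M_f(b,a,theta) (depends on A, B of M).\<close>
definition PLCWT :: "real \<Rightarrow> real \<Rightarrow> (real \<times> real \<Rightarrow> complex) \<Rightarrow> (real \<times> real \<Rightarrow> complex)
    \<Rightarrow> real \<times> real \<Rightarrow> real \<Rightarrow> real \<Rightarrow> complex" where
  "PLCWT A B psi f b a \<theta> = complex_of_real (1 / a) *
     (LINT t|lborel. f t * cnj (psi ((1 / a) *\<^sub>R rot (- \<theta>) (t - b)))
        * exp (\<i> * complex_of_real (A / (2 * B) * ((norm t)\<^sup>2 - (norm b)\<^sup>2))))"

end

theory Submission
  imports Defs
begin

lemma lint_translate:
  fixes g :: "real \<times> real \<Rightarrow> complex" and c :: "real \<times> real"
  shows "(LINT t|lborel. g t) = (LINT s|lborel. g (c + s))"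
proof (cases "g \<in> borel_measurable lborel")
  case True
  have "(LINT t|lborel. g t) = (LINT t|distr lborel borel ((+) c). g t)"
    by (simp add: lborel_distr_plus)
  also have "\<dots> = (LINT s|lborel. g (c + s))"
    using True by (subst integral_distr) auto
  finally show ?thesis .
next
  case False
  have "(\<lambda>s. g (c + s)) \<notin> borel_measurable lborel"
  proof
    assume m: "(\<lambda>s. g (c + s)) \<in> borel_measurable lborel"
    have "(\<lambda>t. (\<lambda>s. g (c + s)) (t - c)) \<in> borel_measurable lborel"
      using m by measurable
    then show False using False by simp
  qed
  then have "\<not> integrable lborel (\<lambda>s. g (c + s))" by auto
  moreover have "\<not> integrable lborel g" using False by auto
  ultimately show ?thesis by (simp add: not_integrable_integral_eq)
qed

theorem mainTheorem7:
  fixes A B C D :: real and psi f :: "real \<times> real \<Rightarrow> complex" and c :: "real \<times> real"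
  assumes "A * D - B * C = 1" and "B \<noteq> 0"
    and "polar_mother_wavelet psi" and "L2 f"
  shows "\<forall>b a \<theta>. a > 0 \<longrightarrow> \<theta> \<in> {0..2 * pi} \<longrightarrow>
     PLCWT A B psi (\<lambda>t. f (t - c) * exp (- \<i> * complex_of_real (A / B * (t \<bullet> c)))) b a \<theta>
     = exp (- \<i> * complex_of_real (A / B * (b \<bullet> c))) * PLCWT A B psi f (b - c) a \<theta>"
proof (intro allI impI)
  fix b :: "real \<times> real" and a \<theta> :: real
  have ph: "exp (- \<i> * complex_of_real (A / B * ((c + s) \<bullet> c))) *
      exp (\<i> * complex_of_real (A / (2 * B) * ((norm (c + s))\<^sup>2 - (norm b)\<^sup>2)))
    = exp (- \<i> * complex_of_real (A / B * (b \<bullet> c))) *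
      exp (\<i> * complex_of_real (A / (2 * B) * ((norm s)\<^sup>2 - (norm (b - c))\<^sup>2)))" for s
  proof -
    have r: "A / (2 * B) * ((norm (c + s))\<^sup>2 - (norm b)\<^sup>2) - A / B * ((c + s) \<bullet> c)
        = A / (2 * B) * ((norm s)\<^sup>2 - (norm (b - c))\<^sup>2) - A / B * (b \<bullet> c)"
      using assms(2)
      by (simp add: power2_norm_eq_inner inner_add_left inner_add_right inner_diff_left
          inner_diff_right inner_commute field_simps)
    have g: "exp (- \<i> * complex_of_real x) * exp (\<i> * complex_of_real y)
        = exp (\<i> * complex_of_real (y - x))" for x y
      by (simp add: algebra_simps flip: exp_add)
    show ?thesis using r by (simp only: g)
  qed
  show "PLCWT A B psi (\<lambda>t. f (t - c) * exp (- \<i> * complex_of_real (A / B * (t \<bullet> c)))) b a \<theta>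
     = exp (- \<i> * complex_of_real (A / B * (b \<bullet> c))) * PLCWT A B psi f (b - c) a \<theta>"
  proof -
    let ?E = "exp (- \<i> * complex_of_real (A / B * (b \<bullet> c)))"
    have pw: "f (c + s - c) * exp (- \<i> * complex_of_real (A / B * ((c + s) \<bullet> c))) *
        cnj (psi ((1 / a) *\<^sub>R rot (- \<theta>) (c + s - b))) *
        exp (\<i> * complex_of_real (A / (2 * B) * ((norm (c + s))\<^sup>2 - (norm b)\<^sup>2)))
      = ?E * (f s * cnj (psi ((1 / a) *\<^sub>R rot (- \<theta>) (s - (b - c)))) *
        exp (\<i> * complex_of_real (A / (2 * B) * ((norm s)\<^sup>2 - (norm (b - c))\<^sup>2))))" for s
    proof -
      have e: "c + s - b = s - (b - c)" "c + s - c = s" by (simp_all add: algebra_simps)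
      define P where "P = cnj (psi ((1 / a) *\<^sub>R rot (- \<theta>) (s - (b - c))))"
      define X1 where "X1 = exp (- \<i> * complex_of_real (A / B * ((c + s) \<bullet> c)))"
      define X2 where "X2 = exp (\<i> * complex_of_real (A / (2 * B) * ((norm (c + s))\<^sup>2 - (norm b)\<^sup>2)))"
      define Y2 where "Y2 = exp (\<i> * complex_of_real (A / (2 * B) * ((norm s)\<^sup>2 - (norm (b - c))\<^sup>2)))"
      have h: "X1 * X2 = ?E * Y2" using ph[of s] unfolding X1_def X2_def Y2_def .
      have "f s * X1 * P * X2 = (f s * P) * (X1 * X2)" by (simp only: mult_ac)
      also have "\<dots> = (f s * P) * (?E * Y2)" by (simp only: h)
      also have "\<dots> = ?E * (f s * P * Y2)" by (simp only: mult_ac)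
      finally show ?thesis unfolding e P_def X1_def X2_def Y2_def .
    qed
    show ?thesis
      unfolding PLCWT_def
      apply (subst lint_translate[where c = c])
      apply (simp only: pw integral_mult_right_zero)
      apply (simp add: mult_ac)
      done
  qed
qed

end
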